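(* Let $T$ be a lifted graph, $F\colon T\to T$ a continuous sun-like map of degree 1, ${\cal P}$ a basic partition of $F$ and ${\cal G}$ its covering graph. If $(A_n)_{n\ge0}$ is the itinerary of some point $x\in X^\infty$ and $\alpha_n:=A_0\dots A_n/\!\sim$, then $(\alpha_n)_{n\ge0}$ is an infinite path in ${\cal G}$. Conversely, if $(\alpha_n)_{n\ge0}$ is an infinite path in ${\cal G}$ with $H(\alpha_0)=k$, then there exists a point $x\in X^\infty$ whose itinerary $(A_n)_{n\ge0}$ satisfies $\alpha_n=A_0\dots A_{n+k}/\!\sim$ for all $n\ge0$.
   Context: A lifted graph is a connected topological space $T$ with a homeomorphism $h\colon\mathbb R\to h(\mathbb R)\subset T$ and a homeomorphism $\tau\colon T\to T$ such that $\tau(h(x))=h(x+1)$, the closure of each connected component of $T\setminus h(\mathbb R)$ is a topological finite graph meeting $h(\mathbb R)$ in exactly one point, and only finitely many such components have closure meeting $h([0,1])$. Identify $h(\mathbb R)$ with $\mathbb R$, write $x+m:=\tau^m(x)$; $r_{\mathbb R}\colon T\to\mathbb R$ is the identity on $\mathbb R$ and maps a component $C$ of $T\setminus\mathbb R$ to the point $\overline C\cap\mathbb R$. $F$ has degree 1 if $F(x+1)=F(x)+1$. Let $T_{\mathbb R}:=\overline{\bigcup_{n\ge0}F^n(\mathbb R)}$, $X:=\overline{T\setminus T_{\mathbb R}}\cap r_{\mathbb R}^{-1}([0,1))$. $F$ is sun-like if $(T\setminus T_{\mathbb R})\cap r_{\mathbb R}^{-1}([0,1))$ consists of finitely many intervals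 with pairwise disjoint closures $X^i$, $i\in\Lambda$ (branches), each a compact interval meeting $T_{\mathbb R}$ in one endpoint $\min X^i$ (fixing the order of $X^i$). $X^\infty:=\{x\in X:F^n(x)\in X+\mathbb Z\ \forall n\ge0\}$. A basic partition is a finite family ${\cal P}=\{X^i_j\}$ of pairwise disjoint nonempty compact intervals $X^i_1<\dots<X^i_{N_i}$ in $X^i$, with $\ell(X^i_j)\in\Lambda$, $p(X^i_j)\in\mathbb Z$, such that $F(X^i_j)\subset(X^{\ell(X^i_j)}+p(X^i_j))\cup\mathrm{Int}(T_{\mathbb R})$, $F(\min X^i_j)=\min X^{\ell(X^i_j)}+p(X^i_j)$, and $F(X\setminus\bigcup X^i_j)\cap(X+\mathbb Z)=\emptyset$. For $x\in X^\infty$ and each $n\ge0$ there is a unique $A_n\in{\cal P}$ with $F^n(x)\in A_n+\mathbb Z$; $(A_n)_{n\ge0}$ is the itinerary of $x$. For $A_0,\dots,A_n\in{\cal P}$, $\langle A_0\dots A_n\rangle:=F^n(\{x\in T: F^i(x)\in A_i+\mathbb Z,\ 0\le i\le n\})\cap X$. $A_0\dots A_n\sim B_0\dots B_m$ iff for some $k\le\min(n,m)$, $A_{n-i}=B_{m-i}$ ($0\le i\le k$) and $\langle A_0\dots A_{n-k}\rangle=A_{n-k}=B_{m-k}=\langle B_0\dots B_{m-k}\rangle$. The covering graph ${\cal G}$: vertices are classes $A_0\dots A_n/\!\sim$ with $\langle A_0\dots A_n\rangle\ne\emptyset$; arrow $\alpha\to\beta$ iff $\alpha=A_0\dots A_n/\!\sim$,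 $\beta=A_0\dots A_nA_{n+1}/\!\sim$ for some $A_i\in{\cal P}$. An infinite path is a sequence of vertices $(\alpha_n)$ with $\alpha_n\to\alpha_{n+1}$ for all $n$. The significant part of $A_0\dots A_n$ is $A_i\dots A_n$ with $i$ largest such that $A_0\dots A_n\sim A_i\dots A_n$; the height of its class is $H:=n-i$. *)

theory Defs
  imports "HOL-Analysis.Analysis"
begin

text \<open>A topological finite graph: a compact Hausdorff space that is the union of a finite
vertex set V and finitely many edges; each edge is a continuous map from [0,1] with
endpoints in V, injective on (0,1), and the open edges are pairwise disjoint and disjoint
from V (i.e. a finite 1-dimensional CW complex).\<close>

definition finite_top_graph :: "'a topology \<Rightarrow> bool" where
  "finite_top_graph G \<longleftrightarrow> Hausdorff_space G \<and> compact_space G \<and>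
    (\<exists>(V::'a set) (E::nat set) (e::nat \<Rightarrow> real \<Rightarrow> 'a).
       finite V \<and> finite E \<and> V \<subseteq> topspace G \<and>
       (\<forall>j\<in>E. continuous_map (subtopology euclideanreal {0..1}) G (e j) \<and>
               inj_on (e j) {0<..<1} \<and> e j 0 \<in> V \<and> e j 1 \<in> V \<and>
               e j ` {0<..<1} \<inter> V = {}) \<and>
       (\<forall>j\<in>E. \<forall>j'\<in>E. j \<noteq> j' \<longrightarrow> e j ` {0<..<1} \<inter> e j' ` {0<..<1} = {}) \<and>
       topspace G = V \<union> (\<Union>j\<in>E. e j ` {0..1}))"

definition off_line_components :: "'a topology \<Rightarrow> (real \<Rightarrow> 'a) \<Rightarrow> 'a set set" where
  "off_line_components T h = connected_components_of (subtopology T (topspace T - range h))"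

definition lifted_graph :: "'a topology \<Rightarrow> (real \<Rightarrow> 'a) \<Rightarrow> ('a \<Rightarrow> 'a) \<Rightarrow> bool" where
  "lifted_graph T h \<tau> \<longleftrightarrow>
     connected_space T \<and>
     embedding_map euclideanreal T h \<and>
     homeomorphic_map T T \<tau> \<and>
     (\<forall>x. \<tau> (h x) = h (x + 1)) \<and>
     (\<forall>C\<in>off_line_components T h.
        finite_top_graph (subtopology T (T closure_of C)) \<and>
        (\<exists>!q. q \<in> (T closure_of C) \<inter> range h)) \<and>
     finite {C\<in>off_line_components T h. (T closure_of C) \<inter> h ` {0..1} \<noteq> {}}"

text \<open>Translation q + m := tau^m(q), m an integer.\<close>
definition tshift :: "'a topology \<Rightarrow> ('a \<Rightarrow> 'a) \<Rightarrow> int \<Rightarrow> 'a \<Rightarrow> 'a" where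
  "tshift T \<tau> m q = (if 0 \<le> m then (\<tau> ^^ nat m) q
                      else (inv_into (topspace T) \<tau> ^^ nat (- m)) q)"

definition shiftZ :: "'a topology \<Rightarrow> ('a \<Rightarrow> 'a) \<Rightarrow> 'a set \<Rightarrow> 'a set" where
  "shiftZ T \<tau> A = (\<Union>m::int. tshift T \<tau> m ` A)"

text \<open>The retraction r_R : T -> R (values in R, identifying h(R) with R).\<close>
definition rR :: "'a topology \<Rightarrow> (real \<Rightarrow> 'a) \<Rightarrow> 'a \<Rightarrow> real" where
  "rR T h q = (if q \<in> range h then inv h q
     else (THE x. h x \<in> T closure_of
                (connected_component_of_set (subtopology T (topspace T - range h)) q)))"

definition degree_one :: "'a topology \<Rightarrow> ('a \<Rightarrow> 'a) \<Rightarrow> ('a \<Rightarrow> 'a) \<Rightarrow> bool" where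
  "degree_one T \<tau> F \<longleftrightarrow> (\<forall>q\<in>topspace T. F (\<tau> q) = \<tau> (F q))"

definition TR :: "'a topology \<Rightarrow> (real \<Rightarrow> 'a) \<Rightarrow> ('a \<Rightarrow> 'a) \<Rightarrow> 'a set" where
  "TR T h F = T closure_of (\<Union>n. (F ^^ n) ` range h)"

definition r01 :: "'a topology \<Rightarrow> (real \<Rightarrow> 'a) \<Rightarrow> 'a set" where
  "r01 T h = {q \<in> topspace T. rR T h q \<in> {0..<1}}"

definition Xset :: "'a topology \<Rightarrow> (real \<Rightarrow> 'a) \<Rightarrow> ('a \<Rightarrow> 'a) \<Rightarrow> 'a set" where
  "Xset T h F = (T closure_of (topspace T - TR T h F)) \<inter> r01 T h"

text \<open>Sun-like: the branches X^i (i in Lambda) are given by embeddings gamma i of [0,1],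
with min X^i = gamma i 0 (this fixes the order on X^i); the set
(T - T_R) cap r^{-1}[0,1) is the union of the intervals gamma i ((0,1]), whose closures
X^i = gamma i ([0,1]) are pairwise disjoint and meet T_R exactly in min X^i.\<close>
definition sun_like ::
  "'a topology \<Rightarrow> (real \<Rightarrow> 'a) \<Rightarrow> ('a \<Rightarrow> 'a) \<Rightarrow> 'i set \<Rightarrow> ('i \<Rightarrow> real \<Rightarrow> 'a) \<Rightarrow> bool" where
  "sun_like T h F \<Lambda> \<gamma> \<longleftrightarrow>
     finite \<Lambda> \<and>
     (\<forall>i\<in>\<Lambda>. embedding_map (subtopology euclideanreal {0..1}) T (\<gamma> i)) \<and>
     (topspace T - TR T h F) \<inter> r01 T h = (\<Union>i\<in>\<Lambda>. \<gamma> i ` {0<..1}) \<and>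
     (\<forall>i\<in>\<Lambda>. T closure_of (\<gamma> i ` {0<..1}) = \<gamma> i ` {0..1}) \<and>
     (\<forall>i\<in>\<Lambda>. \<forall>j\<in>\<Lambda>. i \<noteq> j \<longrightarrow> \<gamma> i ` {0..1} \<inter> \<gamma> j ` {0..1} = {}) \<and>
     (\<forall>i\<in>\<Lambda>. \<gamma> i ` {0..1} \<inter> TR T h F = {\<gamma> i 0})"

definition Xinf :: "'a topology \<Rightarrow> (real \<Rightarrow> 'a) \<Rightarrow> ('a \<Rightarrow> 'a) \<Rightarrow> ('a \<Rightarrow> 'a) \<Rightarrow> 'a set" where
  "Xinf T h \<tau> F = {x \<in> Xset T h F. \<forall>n. (F ^^ n) x \<in> shiftZ T \<tau> (Xset T h F)}"

text \<open>Elements of the partition are the sets X^i_j themselves; each is a compact interval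
gamma i [a,b] inside the branch X^i, with minimum gamma i a.\<close>
definition basic_partition ::
  "'a topology \<Rightarrow> (real \<Rightarrow> 'a) \<Rightarrow> ('a \<Rightarrow> 'a) \<Rightarrow> ('a \<Rightarrow> 'a) \<Rightarrow> 'i set \<Rightarrow> ('i \<Rightarrow> real \<Rightarrow> 'a)
   \<Rightarrow> 'a set set \<Rightarrow> ('a set \<Rightarrow> 'i) \<Rightarrow> ('a set \<Rightarrow> int) \<Rightarrow> bool" where
  "basic_partition T h \<tau> F \<Lambda> \<gamma> P lab p \<longleftrightarrow>
     finite P \<and>
     (\<forall>A\<in>P. \<forall>B\<in>P. A \<noteq> B \<longrightarrow> A \<inter> B = {}) \<and>
     (\<forall>A\<in>P. lab A \<in> \<Lambda>) \<and>
     (\<forall>A\<in>P. \<exists>i\<in>\<Lambda>. \<exists>a b. 0 \<le> a \<and> a \<le> b \<and> b \<le> 1 \<and> A = \<gamma> i ` {a..b} \<and>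
               F (\<gamma> i a) = tshift T \<tau> (p A) (\<gamma> (lab A) 0)) \<and>
     (\<forall>A\<in>P. F ` A \<subseteq> tshift T \<tau> (p A) ` (\<gamma> (lab A) ` {0..1}) \<union> (T interior_of TR T h F)) \<and>
     F ` (Xset T h F - \<Union>P) \<inter> shiftZ T \<tau> (Xset T h F) = {}"

definition is_itinerary ::
  "'a topology \<Rightarrow> ('a \<Rightarrow> 'a) \<Rightarrow> ('a \<Rightarrow> 'a) \<Rightarrow> 'a set set \<Rightarrow> 'a \<Rightarrow> (nat \<Rightarrow> 'a set) \<Rightarrow> bool" where
  "is_itinerary T \<tau> F P x A \<longleftrightarrow> (\<forall>n. A n \<in> P \<and> (F ^^ n) x \<in> shiftZ T \<tau> (A n))"

definition words :: "'a set set \<Rightarrow> 'a set list set" where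
  "words P = {w. w \<noteq> [] \<and> set w \<subseteq> P}"

definition cyl :: "'a topology \<Rightarrow> (real \<Rightarrow> 'a) \<Rightarrow> ('a \<Rightarrow> 'a) \<Rightarrow> ('a \<Rightarrow> 'a) \<Rightarrow> 'a set list \<Rightarrow> 'a set" where
  "cyl T h \<tau> F w =
     (F ^^ (length w - 1)) ` {x \<in> topspace T. \<forall>i<length w. (F ^^ i) x \<in> shiftZ T \<tau> (w ! i)}
     \<inter> Xset T h F"

definition wsim :: "'a topology \<Rightarrow> (real \<Rightarrow> 'a) \<Rightarrow> ('a \<Rightarrow> 'a) \<Rightarrow> ('a \<Rightarrow> 'a)
                    \<Rightarrow> 'a set list \<Rightarrow> 'a set list \<Rightarrow> bool" where
  "wsim T h \<tau> F w v \<longleftrightarrow>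
     (let n = length w - 1; m = length v - 1 in
       \<exists>k \<le> min n m. (\<forall>i\<le>k. w ! (n - i) = v ! (m - i)) \<and>
          cyl T h \<tau> F (take (n - k + 1) w) = w ! (n - k) \<and>
          w ! (n - k) = v ! (m - k) \<and>
          cyl T h \<tau> F (take (m - k + 1) v) = v ! (m - k))"

definition cls :: "'a topology \<Rightarrow> (real \<Rightarrow> 'a) \<Rightarrow> ('a \<Rightarrow> 'a) \<Rightarrow> ('a \<Rightarrow> 'a) \<Rightarrow> 'a set set
                   \<Rightarrow> 'a set list \<Rightarrow> 'a set list set" where
  "cls T h \<tau> F P w = {v \<in> words P. wsim T h \<tau> F w v}"

definition cg_vertices :: "'a topology \<Rightarrow> (real \<Rightarrow> 'a) \<Rightarrow> ('a \<Rightarrow> 'a) \<Rightarrow> ('a \<Rightarrow> 'a) \<Rightarrow> 'a set set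
                   \<Rightarrow> 'a set list set set" where
  "cg_vertices T h \<tau> F P = {cls T h \<tau> F P w | w. w \<in> words P \<and> cyl T h \<tau> F w \<noteq> {}}"

definition cg_arrow :: "'a topology \<Rightarrow> (real \<Rightarrow> 'a) \<Rightarrow> ('a \<Rightarrow> 'a) \<Rightarrow> ('a \<Rightarrow> 'a) \<Rightarrow> 'a set set
                   \<Rightarrow> 'a set list set \<Rightarrow> 'a set list set \<Rightarrow> bool" where
  "cg_arrow T h \<tau> F P \<alpha> \<beta> \<longleftrightarrow>
     \<alpha> \<in> cg_vertices T h \<tau> F P \<and> \<beta> \<in> cg_vertices T h \<tau> F P \<and>
     (\<exists>w A. w \<in> words P \<and> A \<in> P \<and> \<alpha> = cls T h \<tau> F P w \<and> \<beta> = cls T h \<tau> F P (w @ [A]))"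

definition cg_infinite_path :: "'a topology \<Rightarrow> (real \<Rightarrow> 'a) \<Rightarrow> ('a \<Rightarrow> 'a) \<Rightarrow> ('a \<Rightarrow> 'a)
                   \<Rightarrow> 'a set set \<Rightarrow> (nat \<Rightarrow> 'a set list set) \<Rightarrow> bool" where
  "cg_infinite_path T h \<tau> F P \<alpha> \<longleftrightarrow> (\<forall>n. cg_arrow T h \<tau> F P (\<alpha> n) (\<alpha> (Suc n)))"

definition word_height :: "'a topology \<Rightarrow> (real \<Rightarrow> 'a) \<Rightarrow> ('a \<Rightarrow> 'a) \<Rightarrow> ('a \<Rightarrow> 'a)
                   \<Rightarrow> 'a set list \<Rightarrow> nat" where
  "word_height T h \<tau> F w =
     (length w - 1) - (GREATEST i. i < length w \<and> wsim T h \<tau> F w (drop i w))"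

definition cls_height :: "'a topology \<Rightarrow> (real \<Rightarrow> 'a) \<Rightarrow> ('a \<Rightarrow> 'a) \<Rightarrow> ('a \<Rightarrow> 'a)
                   \<Rightarrow> 'a set set \<Rightarrow> 'a set list set \<Rightarrow> nat" where
  "cls_height T h \<tau> F P \<alpha> =
     word_height T h \<tau> F (SOME w. w \<in> words P \<and> \<alpha> = cls T h \<tau> F P w)"

end

theory Submission
  imports Defs
begin

locale LG =
  fixes T :: "'a topology" and h :: "real \<Rightarrow> 'a" and \<tau> F :: "'a \<Rightarrow> 'a"
    and \<Lambda> :: "'i set" and \<gamma> :: "'i \<Rightarrow> real \<Rightarrow> 'a"
    and P :: "'a set set" and lab :: "'a set \<Rightarrow> 'i" and p :: "'a set \<Rightarrow> int"
  assumes lg: "lifted_graph T h \<tau>"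
    and cF: "continuous_map T T F"
    and d1: "degree_one T \<tau> F"
    and sl: "sun_like T h F \<Lambda> \<gamma>"
    and bp: "basic_partition T h \<tau> F \<Lambda> \<gamma> P lab p"
begin

abbreviation "ts \<equiv> tshift T \<tau>"
abbreviation "\<iota> \<equiv> inv_into (topspace T) \<tau>"
abbreviation "TS \<equiv> topspace T"

lemma hom: "homeomorphic_map T T \<tau>" using lg by (simp add: lifted_graph_def)
lemma tau_h: "\<tau> (h x) = h (x + 1)" using lg by (simp add: lifted_graph_def)
lemma tau_top: "q \<in> TS \<Longrightarrow> \<tau> q \<in> TS"
  using homeomorphic_imp_surjective_map[OF hom] by blast
lemma tau_inj: "inj_on \<tau> TS" using homeomorphic_imp_injective_map[OF hom] .
lemma tau_surj: "\<tau> ` TS = TS" using homeomorphic_imp_surjective_map[OF hom] .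
lemma iota_top: "q \<in> TS \<Longrightarrow> \<iota> q \<in> TS"
  by (metis inv_into_into tau_surj)
lemma tau_iota: "q \<in> TS \<Longrightarrow> \<tau> (\<iota> q) = q"
  by (metis f_inv_into_f tau_surj)
lemma iota_tau: "q \<in> TS \<Longrightarrow> \<iota> (\<tau> q) = q"
  by (meson inv_into_f_f tau_inj)

lemma ts_top: "q \<in> TS \<Longrightarrow> ts m q \<in> TS"
proof -
  assume q: "q \<in> TS"
  have a: "(\<tau> ^^ n) q \<in> TS" for n by (induction n) (auto simp: q tau_top)
  have b: "(\<iota> ^^ n) q \<in> TS" for n by (induction n) (auto simp: q iota_top)
  show ?thesis using a b by (simp add: tshift_def)
qed

lemma ts_succ: "q \<in> TS \<Longrightarrow> ts (m + 1) q = \<tau> (ts m q)"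
proof -
  assume q: "q \<in> TS"
  have b: "(\<iota> ^^ n) q \<in> TS" for n by (induction n) (auto simp: q iota_top)
  show ?thesis
  proof (cases "0 \<le> m")
    case True
    then have "nat (m+1) = Suc (nat m)" by simp
    then show ?thesis using True by (simp add: tshift_def)
  next
    case False
    show ?thesis
    proof (cases "m = -1")
      case True
      then show ?thesis by (simp add: tshift_def tau_iota q)
    next
      case False2: False
      then have "nat (-m) = Suc (nat (-(m+1)))" "\<not> 0 \<le> m + 1" using False by auto
      then show ?thesis using False
        by (simp add: tshift_def tau_iota b)
    qed
  qed
qed

lemma ts_pred: "q \<in> TS \<Longrightarrow> ts (m - 1) q = \<iota> (ts m q)"
  by (metis diff_add_cancel iota_tau ts_succ ts_top)

lemma ts_0[simp]: "ts 0 q = q" by (simp add: tshift_def)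

lemma ts_add: "q \<in> TS \<Longrightarrow> ts m (ts n q) = ts (m + n) q"
proof (induction m rule: int_induct[where k=0])
  case base then show ?case by simp
next
  case (step1 i)
  then show ?case by (metis add.commute add.left_commute ts_succ ts_top)
next
  case (step2 i)
  then show ?case by (metis diff_add_eq ts_pred ts_top)
qed

lemma h_emb: "embedding_map euclideanreal T h" using lg by (simp add: lifted_graph_def)
lemma h_top: "h y \<in> TS"
proof -
  have "h ` topspace euclideanreal = topspace (subtopology T (h ` topspace euclideanreal))"
    using h_emb unfolding embedding_map_def by (rule homeomorphic_imp_surjective_map)
  then show ?thesis by auto
qed
lemma h_inj: "inj h"
  using homeomorphic_imp_injective_map[OF h_emb[unfolded embedding_map_def]] by simp

lemma ts_h: "ts m (h x) = h (x + of_int m)"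
proof -
  note htop = h_top
  show ?thesis
  proof (induction m rule: int_induct[where k=0])
    case base then show ?case by simp
  next
    case (step1 i)
    then show ?case by (simp add: ts_succ htop tau_h add.assoc)
  next
    case (step2 i)
    have "\<tau> (h (x + of_int i - 1)) = h (x + of_int i)" by (simp add: tau_h)
    then have "\<iota> (h (x + of_int i)) = h (x + of_int i - 1)"
      by (metis htop iota_tau)
    then show ?case using step2 by (simp add: ts_pred htop algebra_simps)
  qed
qed

end



context LG begin

lemma F_top: "q \<in> TS \<Longrightarrow> F q \<in> TS"
  using continuous_map_image_subset_topspace[OF cF] by blast
lemma Fn_top: "q \<in> TS \<Longrightarrow> (F ^^ n) q \<in> TS"
  by (induction n) (auto simp: F_top)
lemma F_tau: "q \<in> TS \<Longrightarrow> F (\<tau> q) = \<tau> (F q)"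
  using d1 by (simp add: degree_one_def)

lemma F_ts: "q \<in> TS \<Longrightarrow> F (ts m q) = ts m (F q)"
proof (induction m rule: int_induct[where k=0])
  case base then show ?case by simp
next
  case (step1 i)
  then show ?case by (simp add: ts_succ ts_top F_tau F_top)
next
  case (step2 i)
  let ?z = "ts (i - 1) q"
  have z: "?z \<in> TS" "\<tau> ?z = ts i q" using step2 ts_succ[of q "i - 1"] ts_top by auto
  have "F (ts i q) = \<tau> (F ?z)" using z F_tau by metis
  then have "\<iota> (F (ts i q)) = F ?z" using z F_top iota_tau by metis
  then show ?case using step2 by (simp add: ts_pred F_top)
qed

lemma Fn_ts: "q \<in> TS \<Longrightarrow> (F ^^ n) (ts m q) = ts m ((F ^^ n) q)"
  by (induction n) (auto simp: F_ts Fn_top)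

lemma iota_cont: "continuous_map T T \<iota>"
proof -
  obtain g where g: "homeomorphic_maps T T \<tau> g" using hom by (auto simp: homeomorphic_map_maps)
  have "g q = \<iota> q" if "q \<in> TS" for q
  proof -
    have "\<tau> (g q) = q" "g q \<in> TS" using g that
      by (auto simp: homeomorphic_maps_def continuous_map_def)
    then show ?thesis by (metis iota_tau)
  qed
  moreover have "continuous_map T T g" using g by (simp add: homeomorphic_maps_def)
  ultimately show ?thesis using continuous_map_eq by blast
qed

lemma ts_cont: "continuous_map T T (ts m)"
proof (induction m rule: int_induct[where k=0])
  case base
  have "ts 0 = id" by (simp add: fun_eq_iff)
  then show ?case by simp
next
  case (step1 i)
  have "continuous_map T T (\<tau> \<circ> ts i)"
    using step1 homeomorphic_imp_continuous_map[OF hom] continuous_map_compose by blast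
  then show ?case by (rule continuous_map_eq) (simp add: ts_succ)
next
  case (step2 i)
  have "continuous_map T T (\<iota> \<circ> ts i)"
    using step2 iota_cont continuous_map_compose by blast
  then show ?case by (rule continuous_map_eq) (simp add: ts_pred)
qed

lemma ts_image_eq: "K \<subseteq> TS \<Longrightarrow> ts m ` K = {q \<in> TS. ts (-m) q \<in> K}"
proof
  assume K: "K \<subseteq> TS"
  show "ts m ` K \<subseteq> {q \<in> TS. ts (-m) q \<in> K}"
    using K by (auto simp: ts_top ts_add subset_eq)
  show "{q \<in> TS. ts (-m) q \<in> K} \<subseteq> ts m ` K"
  proof clarify
    fix q assume "q \<in> TS" "ts (-m) q \<in> K"
    then show "q \<in> ts m ` K" by (metis image_eqI ts_add add.right_inverse ts_0)
  qed
qed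

lemma ts_closed: "closedin T K \<Longrightarrow> closedin T (ts m ` K)"
  using ts_image_eq[of K m] closedin_continuous_map_preimage[OF ts_cont[of "-m"]]
  by (simp add: closedin_subset)

lemma ts_inv: "q \<in> TS \<Longrightarrow> ts (-m) (ts m q) = q"
  by (simp add: ts_add)

lemma shiftZ_ts: "A \<subseteq> TS \<Longrightarrow> q \<in> shiftZ T \<tau> A \<Longrightarrow> ts m q \<in> shiftZ T \<tau> A"
  unfolding shiftZ_def
proof -
  assume A: "A \<subseteq> TS" and "q \<in> (\<Union>m. ts m ` A)"
  then obtain n a where a: "a \<in> A" "q = ts n a" by auto
  then have "ts m q = ts (m + n) a" using A ts_add by auto
  then show "ts m q \<in> (\<Union>m. ts m ` A)" using a by auto
qed

lemma shiftZ_top: "A \<subseteq> TS \<Longrightarrow> shiftZ T \<tau> A \<subseteq> TS"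
  unfolding shiftZ_def using ts_top by auto

lemma in_shiftZ: "a \<in> A \<Longrightarrow> ts m a \<in> shiftZ T \<tau> A"
  unfolding shiftZ_def by auto

end



context LG begin

abbreviation "SS \<equiv> subtopology T (TS - range h)"
abbreviation comp where "comp q \<equiv> connected_component_of_set SS q"

lemma tSS: "topspace SS = TS - range h" by auto

lemma anchor: "q \<in> TS - range h \<Longrightarrow> \<exists>!x. h x \<in> T closure_of comp q"
proof -
  assume q: "q \<in> TS - range h"
  have "comp q \<in> off_line_components T h"
    unfolding off_line_components_def using q
    by (simp add: connected_component_in_connected_components_of)
  then have "\<exists>!r. r \<in> T closure_of comp q \<inter> range h"
    using lg by (simp add: lifted_graph_def)
  then obtain r where r: "r \<in> T closure_of comp q \<inter> range h"
      and ru: "\<And>r'. r' \<in> T closure_of comp q \<inter> range h \<Longrightarrow> r' = r" by blast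
  then obtain x where x: "r = h x" by blast
  show ?thesis
  proof (rule ex1I[of _ x])
    show "h x \<in> T closure_of comp q" using r x by simp
    fix y assume "h y \<in> T closure_of comp q"
    then have "h y = h x" using ru x by blast
    then show "y = x" using h_inj by (simp add: inj_eq)
  qed
qed

lemma rR_char: "q \<in> TS - range h \<Longrightarrow> h x \<in> T closure_of comp q \<Longrightarrow> rR T h q = x"
  unfolding rR_def using anchor by (auto intro: the1_equality)

lemma rR_in: "q \<in> TS - range h \<Longrightarrow> h (rR T h q) \<in> T closure_of comp q"
proof -
  assume q: "q \<in> TS - range h"
  have "h (THE x. h x \<in> T closure_of comp q) \<in> T closure_of comp q"
    using anchor[OF q] by (rule theI')
  then show ?thesis using q by (simp add: rR_def)
qed

lemma rR_h[simp]: "rR T h (h x) = x"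
  unfolding rR_def using h_inj by simp

lemma tau_off: "q \<in> TS - range h \<Longrightarrow> \<tau> q \<in> TS - range h"
proof -
  assume q: "q \<in> TS - range h"
  have "\<tau> q \<noteq> h y" for y
  proof
    assume "\<tau> q = h y"
    then have "\<tau> q = \<tau> (h (y - 1))" using tau_h[of "y - 1"] by simp
    then have "q = h (y - 1)" using tau_inj q h_top by (meson DiffD1 inj_onD)
    then show False using q by auto
  qed
  then show ?thesis using q tau_top by auto
qed

lemma comp_tau: "q \<in> TS - range h \<Longrightarrow> \<tau> ` comp q \<subseteq> comp (\<tau> q)"
proof -
  assume q: "q \<in> TS - range h"
  have c: "continuous_map SS SS \<tau>"
    using tau_off homeomorphic_imp_continuous_map[OF hom]
    by (auto simp: continuous_map_in_subtopology continuous_map_from_subtopology)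
  have "connectedin SS (\<tau> ` comp q)"
    using connectedin_continuous_map_image[OF c connectedin_connected_component_of] .
  moreover have "\<tau> q \<in> \<tau> ` comp q"
    using q by (simp add: connected_component_of_refl)
  ultimately show ?thesis by (rule connected_component_of_maximal)
qed

lemma rR_tau: "q \<in> TS \<Longrightarrow> rR T h (\<tau> q) = rR T h q + 1"
proof (cases "q \<in> range h")
  case True
  then show ?thesis by (auto simp: tau_h)
next
  case False
  assume "q \<in> TS"
  then have q: "q \<in> TS - range h" using False by auto
  have "h (rR T h q) \<in> T closure_of comp q" using rR_in[OF q] .
  then have "\<tau> (h (rR T h q)) \<in> T closure_of (\<tau> ` comp q)"
    using continuous_map_image_closure_subset[OF homeomorphic_imp_continuous_map[OF hom]] by blast
  also have "\<dots> \<subseteq> T closure_of comp (\<tau> q)"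
    by (rule closure_of_mono[OF comp_tau[OF q]])
  finally show ?thesis using rR_char[OF tau_off[OF q]] by (simp add: tau_h)
qed

lemma rR_ts: "q \<in> TS \<Longrightarrow> rR T h (ts m q) = rR T h q + of_int m"
proof (induction m rule: int_induct[where k=0])
  case base then show ?case by simp
next
  case (step1 i)
  then show ?case by (simp add: ts_succ rR_tau ts_top)
next
  case (step2 i)
  have "rR T h (ts i q) = rR T h (ts (i - 1) q) + 1"
    using ts_succ[of q "i - 1"] rR_tau[of "ts (i - 1) q"] step2 ts_top by simp
  then show ?case using step2 by simp
qed

lemma X_top: "Xset T h F \<subseteq> TS"
  unfolding Xset_def r01_def by blast

lemma X_r01: "q \<in> Xset T h F \<Longrightarrow> rR T h q \<in> {0..<1}"
  unfolding Xset_def r01_def by blast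

lemma X_shift0: "e \<in> Xset T h F \<Longrightarrow> ts d e \<in> Xset T h F \<Longrightarrow> d = 0"
proof -
  assume e: "e \<in> Xset T h F" and d: "ts d e \<in> Xset T h F"
  have eT: "e \<in> TS" using X_top e by (rule subsetD)
  have eq: "rR T h (ts d e) = rR T h e + of_int d" using eT by (rule rR_ts)
  have a: "rR T h e \<in> {0..<1}" using e by (rule X_r01)
  have b: "rR T h (ts d e) \<in> {0..<1}" using d by (rule X_r01)
  from a b eq have "-1 < (of_int d::real)" "(of_int d::real) < 1" by auto
  then show "d = 0" by linarith
qed

lemma TR_top: "TR T h F \<subseteq> TS" by (simp add: TR_def closure_of_subset_topspace)

lemma h_TR: "h x \<in> TR T h F"
proof -
  have "(\<Union>n. (F ^^ n) ` range h) \<subseteq> TS" using Fn_top h_top by blast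
  moreover have "h x \<in> (\<Union>n. (F ^^ n) ` range h)"
    by (rule UN_I[of 0]) simp_all
  ultimately show ?thesis unfolding TR_def by (meson closure_of_subset subsetD)
qed

lemma sl_emb: "i \<in> \<Lambda> \<Longrightarrow> embedding_map (subtopology euclideanreal {0..1}) T (\<gamma> i)"
  using sl by (simp add: sun_like_def)
lemma sl_union: "(TS - TR T h F) \<inter> r01 T h = (\<Union>i\<in>\<Lambda>. \<gamma> i ` {0<..1})"
  using sl by (simp add: sun_like_def)
lemma sl_cl: "i \<in> \<Lambda> \<Longrightarrow> T closure_of (\<gamma> i ` {0<..1}) = \<gamma> i ` {0..1}"
  using sl by (simp add: sun_like_def)
lemma sl_disj: "i \<in> \<Lambda> \<Longrightarrow> j \<in> \<Lambda> \<Longrightarrow> i \<noteq> j \<Longrightarrow> \<gamma> i ` {0..1} \<inter> \<gamma> j ` {0..1} = {}"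
  using sl by (simp add: sun_like_def)

lemma gam_cont: "i \<in> \<Lambda> \<Longrightarrow> continuous_map (subtopology euclideanreal {0..1}) T (\<gamma> i)"
proof -
  assume i: "i \<in> \<Lambda>"
  have "continuous_map (subtopology euclideanreal {0..1})
     (subtopology T (\<gamma> i ` topspace (subtopology euclideanreal {0..1}))) (\<gamma> i)"
    using sl_emb[OF i] unfolding embedding_map_def by (rule homeomorphic_imp_continuous_map)
  then show ?thesis by (simp add: continuous_map_in_subtopology)
qed

lemma gam_top: "i \<in> \<Lambda> \<Longrightarrow> \<gamma> i ` {0..1} \<subseteq> TS"
proof -
  assume i: "i \<in> \<Lambda>"
  have "T closure_of (\<gamma> i ` {0<..1}) \<subseteq> TS" by (rule closure_of_subset_topspace)
  then show ?thesis using sl_cl[OF i] by simp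
qed

lemma gam_open: "i \<in> \<Lambda> \<Longrightarrow> s \<in> {0<..1} \<Longrightarrow> \<gamma> i s \<in> (TS - TR T h F) \<inter> r01 T h"
  unfolding sl_union by (intro UN_I) auto

lemma gam_conn: "i \<in> \<Lambda> \<Longrightarrow> S \<subseteq> {0..1} \<Longrightarrow> connected S \<Longrightarrow> connectedin T (\<gamma> i ` S)"
proof -
  assume i: "i \<in> \<Lambda>" and S: "S \<subseteq> {0..1}" "connected S"
  have "connectedin (subtopology euclideanreal {0..1}) S"
    using S by (simp add: connectedin_subtopology)
  then show ?thesis using connectedin_continuous_map_image[OF gam_cont[OF i]] by blast
qed

lemma notTR_off: "q \<in> TS - TR T h F \<Longrightarrow> q \<in> TS - range h"
proof -
  assume q: "q \<in> TS - TR T h F"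
  have "q \<notin> range h"
  proof
    assume "q \<in> range h"
    then obtain x where "q = h x" by blast
    then show False using q h_TR[of x] by simp
  qed
  then show ?thesis using q by blast
qed

lemma gam0_r01: "i \<in> \<Lambda> \<Longrightarrow> \<gamma> i 0 \<in> r01 T h"
proof -
  assume i: "i \<in> \<Lambda>"
  have g1: "\<gamma> i 1 \<in> (TS - TR T h F) \<inter> r01 T h" using gam_open[OF i, of 1] by simp
  then have g1': "\<gamma> i 1 \<in> TS - range h" using notTR_off IntD1 by metis
  have sub: "\<gamma> i ` {0<..1} \<subseteq> TS - range h"
  proof
    fix q assume "q \<in> \<gamma> i ` {0<..1}"
    then obtain s where s: "s \<in> {0<..1}" "q = \<gamma> i s" by blast
    have "q \<in> TS - TR T h F" using gam_open[OF i s(1)] s(2) by (simp only: IntD1)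
    then show "q \<in> TS - range h" by (rule notTR_off)
  qed
  have "connectedin T (\<gamma> i ` {0<..1})" proof (rule gam_conn[OF i])
    show "connected {0<..(1::real)}" using convex_real_interval by (blast intro: convex_connected)
  qed auto
  then have "connectedin SS (\<gamma> i ` {0<..1})" using sub by (simp add: connectedin_subtopology)
  then have c1: "\<gamma> i ` {0<..1} \<subseteq> comp (\<gamma> i 1)"
    by (rule connected_component_of_maximal) simp
  have g0: "\<gamma> i 0 \<in> T closure_of (\<gamma> i ` {0<..1})" unfolding sl_cl[OF i] by simp
  have g0top: "\<gamma> i 0 \<in> TS" by (rule subsetD[OF gam_top[OF i]]) simp
  have "rR T h (\<gamma> i 0) = rR T h (\<gamma> i 1)"
  proof (cases "\<gamma> i 0 \<in> range h")
    case True
    then obtain t where t: "\<gamma> i 0 = h t" by blast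
    have "\<gamma> i 0 \<in> T closure_of comp (\<gamma> i 1)"
      by (rule subsetD[OF closure_of_mono[OF c1] g0])
    then have "h t \<in> T closure_of comp (\<gamma> i 1)" using t by simp
    then show ?thesis using rR_char[OF g1'] t by simp
  next
    case False
    have sub2: "\<gamma> i ` {0..1} \<subseteq> TS - range h"
    proof
      fix q assume "q \<in> \<gamma> i ` {0..1}"
      then obtain s where s: "s \<in> {0..1}" "q = \<gamma> i s" by blast
      show "q \<in> TS - range h"
      proof (cases "s = 0")
        case True then show ?thesis using s False g0top by simp
      next
        case False then have "s \<in> {0<..1}" using s by simp
        then show ?thesis using s sub by blast
      qed
    qed
    have "connectedin T (\<gamma> i ` {0..1})" using gam_conn[OF i] by simp
    then have "connectedin SS (\<gamma> i ` {0..1})" using sub2 by (simp add: connectedin_subtopology)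
    then have "\<gamma> i ` {0..1} \<subseteq> comp (\<gamma> i 0)"
      by (rule connected_component_of_maximal) simp
    then have "\<gamma> i 1 \<in> comp (\<gamma> i 0)" by (rule subsetD) simp
    then have "connected_component_of SS (\<gamma> i 0) (\<gamma> i 1)" by simp
    then have "comp (\<gamma> i 0) = comp (\<gamma> i 1)"
      by (simp add: connected_component_of_equiv)
    then show ?thesis unfolding rR_def using False g1' by (simp only: if_False) simp
  qed
  then show ?thesis using g1 g0top unfolding r01_def by simp
qed

lemma gam_X: "i \<in> \<Lambda> \<Longrightarrow> \<gamma> i ` {0..1} \<subseteq> Xset T h F"
proof -
  assume i: "i \<in> \<Lambda>"
  have "\<gamma> i ` {0<..1} \<subseteq> TS - TR T h F"
  proof
    fix q assume "q \<in> \<gamma> i ` {0<..1}"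
    then obtain s where s: "s \<in> {0<..1}" "q = \<gamma> i s" by blast
    show "q \<in> TS - TR T h F" using gam_open[OF i s(1)] s(2) by blast
  qed
  then have "\<gamma> i ` {0..1} \<subseteq> T closure_of (TS - TR T h F)"
    using closure_of_mono[of "\<gamma> i ` {0<..1}" "TS - TR T h F" T] sl_cl[OF i] by simp
  moreover have "\<gamma> i ` {0..1} \<subseteq> r01 T h"
  proof
    fix q assume "q \<in> \<gamma> i ` {0..1}"
    then obtain s where s: "s \<in> {0..1}" "q = \<gamma> i s" by auto
    show "q \<in> r01 T h"
    proof (cases "s = 0")
      case True then show ?thesis using s gam0_r01[OF i] by simp
    next
      case False then have "s \<in> {0<..1}" using s by simp
      then show ?thesis using s gam_open[OF i, of s] by blast
    qed
  qed
  ultimately show ?thesis unfolding Xset_def by blast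
qed

end



context LG begin

abbreviation XX where "XX \<equiv> Xset T h F"
abbreviation cy where "cy w \<equiv> cyl T h \<tau> F w"
abbreviation SZ where "SZ A \<equiv> shiftZ T \<tau> A"

lemma bp_fin: "finite P" using bp by (simp add: basic_partition_def)
lemma bp_lab: "A \<in> P \<Longrightarrow> lab A \<in> \<Lambda>" using bp by (simp add: basic_partition_def)
lemma bp_shape0: "\<forall>A\<in>P. \<exists>i\<in>\<Lambda>. \<exists>a b. 0 \<le> a \<and> a \<le> b \<and> b \<le> 1 \<and> A = \<gamma> i ` {a..b} \<and>
               F (\<gamma> i a) = tshift T \<tau> (p A) (\<gamma> (lab A) 0)"
  using bp by (simp add: basic_partition_def)
lemma bp_shape: "A \<in> P \<Longrightarrow> \<exists>i\<in>\<Lambda>. \<exists>a b. 0 \<le> a \<and> a \<le> b \<and> b \<le> 1 \<and> A = \<gamma> i ` {a..b}"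
proof -
  assume "A \<in> P"
  then obtain i a b where "i \<in> \<Lambda>" "0 \<le> a \<and> a \<le> b \<and> b \<le> 1 \<and> A = \<gamma> i ` {a..b}"
    using bp_shape0 by meson
  then show ?thesis by blast
qed
lemma bp_img0: "\<forall>A\<in>P. F ` A \<subseteq> tshift T \<tau> (p A) ` (\<gamma> (lab A) ` {0..1}) \<union> (T interior_of TR T h F)"
  using bp by (simp add: basic_partition_def)
lemma bp_img: "A \<in> P \<Longrightarrow> F ` A \<subseteq> ts (p A) ` (\<gamma> (lab A) ` {0..1}) \<union> (T interior_of TR T h F)"
  using bp_img0 by (rule bspec)

lemma P_X: "A \<in> P \<Longrightarrow> A \<subseteq> XX"
proof -
  assume "A \<in> P"
  then obtain i a b where i: "i \<in> \<Lambda>" "0 \<le> a" "a \<le> b" "b \<le> 1" "A = \<gamma> i ` {a..b}"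
    using bp_shape by blast
  then have "A \<subseteq> \<gamma> i ` {0..1}" by auto
  then show ?thesis using gam_X[OF i(1)] by (rule order_trans)
qed

lemma P_top: "A \<in> P \<Longrightarrow> A \<subseteq> TS" using P_X X_top by (rule order_trans)

definition Sw where "Sw w = {x \<in> TS. \<forall>i<length w. (F ^^ i) x \<in> SZ (w ! i)}"

lemma cy_Sw: "cy w = (F ^^ (length w - 1)) ` Sw w \<inter> XX"
  by (simp add: cyl_def Sw_def)

lemma Sw_single: "Sw [A] = TS \<inter> SZ A"
  unfolding Sw_def by auto

lemma cyl_single: "A \<in> P \<Longrightarrow> cy [A] = A"
proof -
  assume A: "A \<in> P"
  have "cy [A] = TS \<inter> SZ A \<inter> XX" by (simp add: cy_Sw Sw_single)
  also have "\<dots> = A"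
  proof
    show "A \<subseteq> TS \<inter> SZ A \<inter> XX"
    proof
      fix a assume a: "a \<in> A"
      have "ts 0 a \<in> SZ A" using a by (rule in_shiftZ)
      then show "a \<in> TS \<inter> SZ A \<inter> XX" using a P_X[OF A] P_top[OF A] by auto
    qed
    show "TS \<inter> SZ A \<inter> XX \<subseteq> A"
    proof
      fix q assume q: "q \<in> TS \<inter> SZ A \<inter> XX"
      then obtain m a where a: "a \<in> A" "q = ts m a" unfolding shiftZ_def by blast
      have "m = 0" using X_shift0[of a m] a q P_X[OF A] by blast
      then show "q \<in> A" using a by simp
    qed
  qed
  finally show ?thesis .
qed

lemma words_P: "w \<in> words P \<Longrightarrow> i < length w \<Longrightarrow> w ! i \<in> P"
  unfolding words_def by (simp add: subset_iff)

lemma words_top: "w \<in> words P \<Longrightarrow> i < length w \<Longrightarrow> w ! i \<subseteq> TS"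
  unfolding words_def using P_top nth_mem by blast

lemma Sw_shift: "w \<in> words P \<Longrightarrow> x \<in> Sw w \<Longrightarrow> ts m x \<in> Sw w"
proof -
  assume w: "w \<in> words P" and x: "x \<in> Sw w"
  have "(F ^^ i) (ts m x) \<in> SZ (w ! i)" if i: "i < length w" for i
  proof -
    have "x \<in> TS" "(F ^^ i) x \<in> SZ (w ! i)" using x i by (auto simp: Sw_def)
    then show ?thesis using Fn_ts shiftZ_ts[OF words_top[OF w i]] by metis
  qed
  then show ?thesis using x ts_top by (auto simp: Sw_def)
qed

lemma image_shiftZ: "w \<in> words P \<Longrightarrow> (F ^^ (length w - 1)) ` Sw w = SZ (cy w)"
proof -
  assume w: "w \<in> words P"
  let ?l = "length w - 1"
  have l: "?l < length w" using w by (simp add: words_def)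
  show ?thesis
  proof
    show "(F ^^ ?l) ` Sw w \<subseteq> SZ (cy w)"
    proof
      fix y assume "y \<in> (F ^^ ?l) ` Sw w"
      then obtain x where x: "x \<in> Sw w" "y = (F ^^ ?l) x" by blast
      then have xt: "x \<in> TS" by (simp add: Sw_def)
      have "y \<in> SZ (w ! ?l)" using x l by (simp add: Sw_def)
      then obtain m a where a: "a \<in> w ! ?l" "y = ts m a" unfolding shiftZ_def by blast
      have aX: "a \<in> XX" using a(1) P_X[OF words_P[OF w l]] by blast
      let ?x' = "ts (-m) x"
      have x': "?x' \<in> Sw w" using Sw_shift[OF w x(1)] .
      have "(F ^^ ?l) ?x' = ts (-m) y" using Fn_ts xt x(2) by simp
      also have "\<dots> = a" using a ts_inv words_top[OF w l] by (metis add.inverse_inverse subsetD ts_add add.left_inverse ts_0)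
      finally have "a \<in> cy w" unfolding cy_Sw using x' aX by blast
      then show "y \<in> SZ (cy w)" using a(2) by (simp add: in_shiftZ)
    qed
    show "SZ (cy w) \<subseteq> (F ^^ ?l) ` Sw w"
    proof
      fix y assume "y \<in> SZ (cy w)"
      then obtain m a where a: "a \<in> cy w" "y = ts m a" unfolding shiftZ_def by blast
      then obtain x where x: "x \<in> Sw w" "a = (F ^^ ?l) x" unfolding cy_Sw by blast
      have "y = (F ^^ ?l) (ts m x)" using a x Fn_ts by (simp add: Sw_def)
      then show "y \<in> (F ^^ ?l) ` Sw w" using Sw_shift[OF w x(1)] by blast
    qed
  qed
qed

lemma cyl_snoc: "w \<in> words P \<Longrightarrow>
   cy (w @ [B]) = F ` (SZ (cy w) \<inter> {y. F y \<in> SZ B}) \<inter> XX"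
proof -
  assume w: "w \<in> words P"
  let ?l = "length w - 1"
  have L: "length w = Suc ?l" using w by (simp add: words_def)
  have S: "Sw (w @ [B]) = {x \<in> Sw w. (F ^^ length w) x \<in> SZ B}"
    unfolding Sw_def by (auto simp: nth_append less_Suc_eq)
  have "(F ^^ length w) ` Sw (w @ [B]) = F ` ((F ^^ ?l) ` Sw w \<inter> {y. F y \<in> SZ B})"
  proof -
    have fx: "(F ^^ length w) x = F ((F ^^ ?l) x)" for x using L by (metis funpow.simps(2) comp_apply)
    show ?thesis unfolding S
    proof (intro equalityI subsetI)
      fix z assume "z \<in> (F ^^ length w) ` {x \<in> Sw w. (F ^^ length w) x \<in> SZ B}"
      then obtain x where x: "x \<in> Sw w" "(F ^^ length w) x \<in> SZ B" "z = (F ^^ length w) x" by blast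
      then show "z \<in> F ` ((F ^^ ?l) ` Sw w \<inter> {y. F y \<in> SZ B})" unfolding fx by blast
    next
      fix z assume "z \<in> F ` ((F ^^ ?l) ` Sw w \<inter> {y. F y \<in> SZ B})"
      then obtain x where x: "x \<in> Sw w" "F ((F ^^ ?l) x) \<in> SZ B" "z = F ((F ^^ ?l) x)" by blast
      then show "z \<in> (F ^^ length w) ` {x \<in> Sw w. (F ^^ length w) x \<in> SZ B}"
        unfolding fx by blast
    qed
  qed
  then show ?thesis unfolding cy_Sw[of "w @ [B]"] image_shiftZ[OF w, symmetric] by simp
qed

end



context LG begin

lemma words_append: "u \<in> words P \<Longrightarrow> set z \<subseteq> P \<Longrightarrow> u @ z \<in> words P"
  unfolding words_def by simp

lemma words_take: "w \<in> words P \<Longrightarrow> take (Suc j) w \<in> words P"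
  unfolding words_def by (auto dest: in_set_takeD)

lemma words_drop: "w \<in> words P \<Longrightarrow> j < length w \<Longrightarrow> drop j w \<in> words P"
  unfolding words_def by (auto dest: in_set_dropD)

lemma cyl_cong: "u \<in> words P \<Longrightarrow> u' \<in> words P \<Longrightarrow> set z \<subseteq> P \<Longrightarrow> cy u = cy u'
   \<Longrightarrow> cy (u @ z) = cy (u' @ z)"
proof (induction z rule: rev_induct)
  case Nil then show ?case by simp
next
  case (snoc B z)
  have z: "set z \<subseteq> P" using snoc by simp
  have "cy ((u @ z) @ [B]) = cy ((u' @ z) @ [B])"
    using snoc z by (simp only: cyl_snoc[OF words_append[OF snoc(2) z]] cyl_snoc[OF words_append[OF snoc(3) z]])
  then show ?case by simp
qed

definition renew where "renew w j \<longleftrightarrow> j < length w \<and> cy (take (Suc j) w) = w ! j"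

lemma renew_0: "w \<in> words P \<Longrightarrow> renew w 0"
proof -
  assume w: "w \<in> words P"
  then obtain a w' where aw: "w = a # w'" unfolding words_def by (cases w) auto
  then have "a \<in> P" using w unfolding words_def by simp
  then show ?thesis unfolding renew_def aw by (simp add: cyl_single)
qed

lemma renew_drop: "w \<in> words P \<Longrightarrow> renew w j \<Longrightarrow> cy w = cy (drop j w)"
proof -
  assume w: "w \<in> words P" and r: "renew w j"
  have j: "j < length w" and c: "cy (take (Suc j) w) = w ! j" using r by (auto simp: renew_def)
  have wj: "w ! j \<in> P" using words_P[OF w j] .
  have s: "[w ! j] \<in> words P" using wj by (simp add: words_def)
  have z: "set (drop (Suc j) w) \<subseteq> P" using w unfolding words_def by (auto dest: in_set_dropD)
  have "cy (take (Suc j) w) = cy [w ! j]" using c cyl_single[OF wj] by simp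
  then have "cy (take (Suc j) w @ drop (Suc j) w) = cy ([w ! j] @ drop (Suc j) w)"
    using cyl_cong[OF words_take[OF w] s z] by blast
  then show ?thesis using Cons_nth_drop_Suc[OF j] by simp
qed

lemma renew_shift: "w \<in> words P \<Longrightarrow> renew w j \<Longrightarrow> j \<le> l \<Longrightarrow> renew w l \<longleftrightarrow> renew (drop j w) (l - j)"
proof -
  assume w: "w \<in> words P" and r: "renew w j" and jl: "j \<le> l"
  have j: "j < length w" using r by (simp add: renew_def)
  show ?thesis
  proof (cases "l < length w")
    case False
    then show ?thesis unfolding renew_def using jl by auto
  next
    case True
    let ?u = "take (Suc l) w"
    have u: "?u \<in> words P" using words_take[OF w] .
    have ru: "renew ?u j" using r jl True unfolding renew_def by (simp add: min_def)
    have "cy ?u = cy (drop j ?u)" using renew_drop[OF u ru] .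
    also have "drop j ?u = take (Suc (l - j)) (drop j w)"
      using jl by (simp add: drop_take Suc_diff_le)
    finally have e: "cy ?u = cy (take (Suc (l - j)) (drop j w))" .
    have e2: "w ! l = drop j w ! (l - j)" using jl True by simp
    show ?thesis unfolding renew_def using True jl j e e2 by auto
  qed
qed

lemma wsim_iff: "w \<in> words P \<Longrightarrow> v \<in> words P \<Longrightarrow>
  wsim T h \<tau> F w v \<longleftrightarrow> (\<exists>j j'. renew w j \<and> renew v j' \<and> drop j w = drop j' v)"
proof -
  assume w: "w \<in> words P" and v: "v \<in> words P"
  define n where "n = length w - 1"
  define m where "m = length v - 1"
  have ln: "length w = Suc n" and lm: "length v = Suc m"
    using w v by (auto simp: words_def n_def m_def)
  show ?thesis
  proof
    assume "wsim T h \<tau> F w v"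
    then obtain k where k: "k \<le> min n m" "\<forall>i\<le>k. w ! (n - i) = v ! (m - i)"
      "cy (take (n - k + 1) w) = w ! (n - k)" "w ! (n - k) = v ! (m - k)"
      "cy (take (m - k + 1) v) = v ! (m - k)"
      unfolding wsim_def Let_def n_def m_def by blast
    have r1: "renew w (n - k)" using k ln unfolding renew_def by simp
    have r2: "renew v (m - k)" using k lm unfolding renew_def by simp
    have "drop (n - k) w = drop (m - k) v"
    proof (rule nth_equalityI)
      show "length (drop (n - k) w) = length (drop (m - k) v)" using k ln lm by simp
      fix i assume "i < length (drop (n - k) w)"
      then have i: "i \<le> k" using k ln by simp
      have "drop (n - k) w ! i = w ! (n - (k - i))" using i k ln by (simp add: algebra_simps)
      also have "\<dots> = v ! (m - (k - i))" using k(2) by simp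
      also have "\<dots> = drop (m - k) v ! i" using i k lm by (simp add: algebra_simps)
      finally show "drop (n - k) w ! i = drop (m - k) v ! i" .
    qed
    then show "\<exists>j j'. renew w j \<and> renew v j' \<and> drop j w = drop j' v" using r1 r2 by blast
  next
    assume "\<exists>j j'. renew w j \<and> renew v j' \<and> drop j w = drop j' v"
    then obtain j j' where r: "renew w j" "renew v j'" "drop j w = drop j' v" by blast
    have j: "j \<le> n" "j' \<le> m" using r ln lm by (auto simp: renew_def)
    define k where "k = n - j"
    have len: "n - j = m - j'" using arg_cong[OF r(3), of length] ln lm by simp
    have k1: "k \<le> min n m" "n - k = j" "m - k = j'" using j len by (auto simp: k_def)
    have k2: "\<forall>i\<le>k. w ! (n - i) = v ! (m - i)"
    proof (intro allI impI)
      fix i assume i: "i \<le> k"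
      have "w ! (n - i) = drop j w ! (k - i)" using i j ln by (simp add: k_def algebra_simps)
      also have "\<dots> = drop j' v ! (k - i)" using r(3) by simp
      also have "\<dots> = v ! (m - i)" using i j lm len by (simp add: k_def algebra_simps)
      finally show "w ! (n - i) = v ! (m - i)" .
    qed
    have "w ! j = v ! j'" using k2 k1 by (metis order_refl)
    then show "wsim T h \<tau> F w v"
      unfolding wsim_def Let_def n_def[symmetric] m_def[symmetric]
      using k1 k2 r(1,2) by (intro exI[of _ k]) (simp add: renew_def)
  qed
qed

lemma wsim_refl: "w \<in> words P \<Longrightarrow> wsim T h \<tau> F w w"
  using wsim_iff renew_0 by blast

lemma wsim_sym: "w \<in> words P \<Longrightarrow> v \<in> words P \<Longrightarrow> wsim T h \<tau> F w v \<Longrightarrow> wsim T h \<tau> F v w"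
  using wsim_iff by metis

lemma wsim_trans: "w \<in> words P \<Longrightarrow> v \<in> words P \<Longrightarrow> u \<in> words P \<Longrightarrow>
   wsim T h \<tau> F w v \<Longrightarrow> wsim T h \<tau> F v u \<Longrightarrow> wsim T h \<tau> F w u"
proof -
  assume w: "w \<in> words P" and v: "v \<in> words P" and u: "u \<in> words P"
    and wv: "wsim T h \<tau> F w v" and vu: "wsim T h \<tau> F v u"
  obtain j1 j2 where a: "renew w j1" "renew v j2" "drop j1 w = drop j2 v"
    using wv wsim_iff[OF w v] by blast
  obtain j2' j3 where b: "renew v j2'" "renew u j3" "drop j2' v = drop j3 u"
    using vu wsim_iff[OF v u] by blast
  show ?thesis
  proof (cases "j2 \<le> j2'")
    case True
    define d where "d = j2' - j2"
    have "renew (drop j2 v) d" using renew_shift[OF v a(2) True] b(1) by (simp add: d_def)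
    then have "renew (drop j1 w) d" using a(3) by simp
    then have r: "renew w (j1 + d)" using renew_shift[OF w a(1), of "j1 + d"] by simp
    have "drop (j1 + d) w = drop d (drop j1 w)" by (simp add: add.commute)
    also have "\<dots> = drop j2' v" using a(3) True by (simp add: d_def)
    finally have "drop (j1 + d) w = drop j3 u" using b(3) by simp
    then show ?thesis using wsim_iff[OF w u] r b(2) by blast
  next
    case False
    define d where "d = j2 - j2'"
    have "renew (drop j2' v) d" using renew_shift[OF v b(1), of j2] False a(2) by (simp add: d_def)
    then have "renew (drop j3 u) d" using b(3) by simp
    then have r: "renew u (j3 + d)" using renew_shift[OF u b(2), of "j3 + d"] by simp
    have "drop (j3 + d) u = drop d (drop j3 u)" by (simp add: add.commute)
    also have "\<dots> = drop d (drop j2' v)" using b(3) by simp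
    also have "\<dots> = drop j2 v" using False by (simp add: d_def)
    finally have "drop (j3 + d) u = drop j1 w" using a(3) by simp
    then show ?thesis using wsim_iff[OF w u] r a(1) by metis
  qed
qed

lemma wsim_cy: "w \<in> words P \<Longrightarrow> v \<in> words P \<Longrightarrow> wsim T h \<tau> F w v \<Longrightarrow> cy w = cy v"
  using wsim_iff renew_drop by metis

lemma renew_snoc: "renew w j \<Longrightarrow> renew (w @ [B]) j"
  unfolding renew_def by (simp add: nth_append)

lemma wsim_snoc: "w \<in> words P \<Longrightarrow> v \<in> words P \<Longrightarrow> B \<in> P \<Longrightarrow> wsim T h \<tau> F w v \<Longrightarrow>
   wsim T h \<tau> F (w @ [B]) (v @ [B])"
proof -
  assume w: "w \<in> words P" and v: "v \<in> words P" and B: "B \<in> P" and wv: "wsim T h \<tau> F w v"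
  obtain j j' where a: "renew w j" "renew v j'" "drop j w = drop j' v"
    using wv wsim_iff[OF w v] by blast
  have j: "j \<le> length w" "j' \<le> length v" using a by (auto simp: renew_def)
  have "drop j (w @ [B]) = drop j' (v @ [B])" using a(3) j by simp
  moreover have "w @ [B] \<in> words P" "v @ [B] \<in> words P" using w v B by (auto simp: words_def)
  ultimately show ?thesis using wsim_iff renew_snoc a by metis
qed

lemma cls_eq: "w \<in> words P \<Longrightarrow> v \<in> words P \<Longrightarrow> cls T h \<tau> F P w = cls T h \<tau> F P v \<longleftrightarrow> wsim T h \<tau> F w v"
proof
  assume w: "w \<in> words P" and v: "v \<in> words P"
  {
    assume "cls T h \<tau> F P w = cls T h \<tau> F P v"
    moreover have "v \<in> cls T h \<tau> F P v" using v wsim_refl by (simp add: cls_def)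
    ultimately have "v \<in> cls T h \<tau> F P w" by simp
    then show "wsim T h \<tau> F w v" by (simp add: cls_def)
  }
  {
    assume wv: "wsim T h \<tau> F w v"
    show "cls T h \<tau> F P w = cls T h \<tau> F P v"
      unfolding cls_def using wv w v wsim_trans wsim_sym by blast
  }
qed

end



context LG begin

lemma Fn_cont: "continuous_map T T (F ^^ n)"
proof (induction n)
  case 0 then show ?case by (simp add: continuous_map_id)
next
  case (Suc n)
  have "F ^^ Suc n = F \<circ> F ^^ n" by simp
  then show ?case using continuous_map_compose[OF Suc cF] by metis
qed

lemma TR_shift: "ts j ` TR T h F \<subseteq> TR T h F"
proof -
  let ?U = "\<Union>n. (F ^^ n) ` range h"
  have U: "ts j ` ?U \<subseteq> ?U"
  proof
    fix q assume "q \<in> ts j ` ?U"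
    then obtain n x where q: "q = ts j ((F ^^ n) (h x))" by blast
    then have "q = (F ^^ n) (h (x + of_int j))" using Fn_ts[OF h_top] ts_h by simp
    then show "q \<in> ?U" by blast
  qed
  have "ts j ` TR T h F \<subseteq> T closure_of (ts j ` ?U)"
    unfolding TR_def by (rule continuous_map_image_closure_subset[OF ts_cont])
  also have "\<dots> \<subseteq> T closure_of ?U" by (rule closure_of_mono[OF U])
  finally show ?thesis unfolding TR_def .
qed

lemma not_int: "b \<in> XX \<Longrightarrow> ts k b \<notin> T interior_of TR T h F"
proof -
  assume b: "b \<in> XX"
  have b1: "b \<in> T closure_of (TS - TR T h F)" using b by (simp add: Xset_def)
  have sub: "ts k ` (TS - TR T h F) \<subseteq> TS - TR T h F"
  proof
    fix q assume "q \<in> ts k ` (TS - TR T h F)"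
    then obtain r where r: "r \<in> TS" "r \<notin> TR T h F" "q = ts k r" by blast
    have "q \<notin> TR T h F"
    proof
      assume "q \<in> TR T h F"
      then have "ts (-k) q \<in> TR T h F" using TR_shift by blast
      then show False using r ts_inv by (metis add.commute ts_add add.right_inverse ts_0)
    qed
    then show "q \<in> TS - TR T h F" using r ts_top by blast
  qed
  have "ts k b \<in> T closure_of (ts k ` (TS - TR T h F))"
    using continuous_map_image_closure_subset[OF ts_cont] b1 by blast
  also have "\<dots> \<subseteq> T closure_of (TS - TR T h F)" by (rule closure_of_mono[OF sub])
  also have "\<dots> = TS - T interior_of TR T h F" by (rule closure_of_complement)
  finally show ?thesis by blast
qed

lemma step_shift: "A \<in> P \<Longrightarrow> B \<in> P \<Longrightarrow> q \<in> ts c ` A \<Longrightarrow> F q \<in> SZ B \<Longrightarrow> F q \<in> ts (c + p A) ` B"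
proof -
  assume A: "A \<in> P" and B: "B \<in> P" and q: "q \<in> ts c ` A" and Fq: "F q \<in> SZ B"
  obtain a where a: "a \<in> A" "q = ts c a" using q by blast
  have aT: "a \<in> TS" using a P_top[OF A] by blast
  obtain m b where b: "b \<in> B" "F q = ts m b" using Fq unfolding shiftZ_def by blast
  have bT: "b \<in> TS" and bX: "b \<in> XX" using b P_top[OF B] P_X[OF B] by blast+
  have "F q = ts c (F a)" using a F_ts[OF aT] by simp
  then have "F a = ts (-c) (F q)" using ts_inv F_top[OF aT] by (metis add.commute add.right_inverse ts_add ts_0)
  also have "\<dots> = ts (m - c) b" using b bT ts_add by simp
  finally have Fa: "F a = ts (m - c) b" .
  have "F a \<in> ts (p A) ` (\<gamma> (lab A) ` {0..1}) \<union> (T interior_of TR T h F)"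
    using bp_img[OF A] a by blast
  moreover have "F a \<notin> T interior_of TR T h F" using Fa not_int[OF bX] by simp
  ultimately obtain e where e: "e \<in> \<gamma> (lab A) ` {0..1}" "F a = ts (p A) e" by blast
  have eX: "e \<in> XX" using e gam_X[OF bp_lab[OF A]] by blast
  have eT: "e \<in> TS" using eX X_top by blast
  have "b = ts (-(m - c)) (F a)" using Fa ts_inv bT by (metis add.commute add.right_inverse ts_add ts_0)
  also have "\<dots> = ts (p A - (m - c)) e" using e(2) eT ts_add by (simp add: algebra_simps)
  finally have "ts (p A - (m - c)) e \<in> XX" using bX by simp
  then have "p A - (m - c) = 0" by (rule X_shift0[OF eX])
  then have "m = c + p A" by simp
  then show ?thesis using b by blast
qed

lemma P_closed: "A \<in> P \<Longrightarrow> closedin T A"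
proof -
  assume "A \<in> P"
  then obtain i a b where i: "i \<in> \<Lambda>" "0 \<le> a" "a \<le> b" "b \<le> 1" "A = \<gamma> i ` {a..b}"
    using bp_shape by blast
  let ?G = "\<gamma> i ` {0..1}"
  have hm: "homeomorphic_map (subtopology euclideanreal {0..1}) (subtopology T ?G) (\<gamma> i)"
    using sl_emb[OF i(1)] unfolding embedding_map_def by simp
  have c1: "closedin (subtopology euclideanreal {0..1}) {a..b}"
    using i by (simp add: closedin_subtopology_refl closedin_closed_subtopology closed_real_atLeastAtMost)
  have "closedin (subtopology T ?G) (\<gamma> i ` {a..b})"
    using homeomorphic_map_closedness[OF hm] c1 i by (simp add: closedin_subset)
  moreover have "closedin T ?G" using sl_cl[OF i(1)] by (metis closedin_closure_of)
  ultimately show ?thesis using i(5) closedin_trans_full by blast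
qed

lemma P_compact: "A \<in> P \<Longrightarrow> compactin T A"
proof -
  assume "A \<in> P"
  then obtain i a b where i: "i \<in> \<Lambda>" "0 \<le> a" "a \<le> b" "b \<le> 1" "A = \<gamma> i ` {a..b}"
    using bp_shape by blast
  have "compactin (subtopology euclideanreal {0..1}) {a..b}"
    using i by (simp add: compactin_subtopology)
  then show ?thesis using image_compactin[OF _ gam_cont[OF i(1)]] i(5) by blast
qed

end



context LG begin

lemma SZ_mono: "A \<subseteq> B \<Longrightarrow> SZ A \<subseteq> SZ B"
  unfolding shiftZ_def by blast

lemma chain:
  assumes AP: "\<And>n. A n \<in> P" and x0: "x \<in> A 0"
    and it: "\<And>i. i < N \<Longrightarrow> (F ^^ i) x \<in> SZ (A i)"
  shows "i < N \<Longrightarrow> (F ^^ i) x \<in> ts (\<Sum>l<i. p (A l)) ` A i"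
proof (induction i)
  case 0
  then show ?case using x0 by simp
next
  case (Suc i)
  then have "(F ^^ i) x \<in> ts (\<Sum>l<i. p (A l)) ` A i" by simp
  moreover have "F ((F ^^ i) x) \<in> SZ (A (Suc i))" using it[OF Suc.prems] by simp
  ultimately have "F ((F ^^ i) x) \<in> ts ((\<Sum>l<i. p (A l)) + p (A i)) ` A (Suc i)"
    using step_shift[OF AP AP] by blast
  then show ?case by simp
qed

lemma realize:
  assumes AP: "\<And>n. A n \<in> P"
    and fin: "\<And>N. \<exists>y\<in>TS. \<forall>i<N. (F ^^ i) y \<in> SZ (A i)"
  shows "\<exists>x. x \<in> Xinf T h \<tau> F \<and> is_itinerary T \<tau> F P x A"
proof -
  define c where "c i = (\<Sum>l<i. p (A l))" for i
  define U where "U n = {x \<in> TS. \<forall>i<n. (F ^^ i) x \<in> ts (c i) ` A i}" for n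
  define K where "K n = U n \<inter> A 0" for n
  have Ucl: "closedin T (U n)" for n
  proof (induction n)
    case 0 then show ?case by (simp add: U_def)
  next
    case (Suc n)
    have "U (Suc n) = U n \<inter> {x \<in> TS. (F ^^ n) x \<in> ts (c n) ` A n}"
      unfolding U_def by (auto simp: less_Suc_eq)
    moreover have "closedin T {x \<in> TS. (F ^^ n) x \<in> ts (c n) ` A n}"
      by (rule closedin_continuous_map_preimage[OF Fn_cont ts_closed[OF P_closed[OF AP]]])
    ultimately show ?case using Suc closedin_Int by metis
  qed
  have A0: "compactin T (A 0)" "A 0 \<subseteq> TS" using P_compact[OF AP] P_top[OF AP] by auto
  have Kcl: "closedin (subtopology T (A 0)) (K n)" for n
    unfolding K_def closedin_subtopology using Ucl by blast
  have Kne: "K n \<noteq> {}" for n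
  proof -
    obtain y where y: "y \<in> TS" "\<And>i. i < Suc n \<Longrightarrow> (F ^^ i) y \<in> SZ (A i)" using fin[of "Suc n"] by blast
    have "y \<in> SZ (A 0)" using y(2)[of 0] by simp
    then obtain m a where a: "a \<in> A 0" "y = ts m a" unfolding shiftZ_def by blast
    let ?y = "ts (-m) y"
    have ya: "?y = a" using a A0(2) ts_add by auto
    have yi: "(F ^^ i) ?y \<in> SZ (A i)" if "i < Suc n" for i
      using Fn_ts[OF y(1)] shiftZ_ts[OF P_top[OF AP] y(2)[OF that]] by simp
    have "(F ^^ i) ?y \<in> ts (c i) ` A i" if "i < Suc n" for i
      unfolding c_def by (rule chain[OF AP _ yi that]) (use a ya in simp_all)
    then have "?y \<in> K n" unfolding K_def U_def using ya a A0(2) by auto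
    then show ?thesis by blast
  qed
  have dec: "decseq K" unfolding decseq_def K_def U_def by auto
  have "(\<Inter>n. K n) \<noteq> {}"
    by (rule compact_space_imp_nest[OF compact_space_subtopology[OF A0(1)] Kcl Kne dec])
  then obtain x where x: "\<And>n. x \<in> K n" by blast
  have x0: "x \<in> A 0" using x[of 0] by (simp add: K_def)
  have xi: "(F ^^ i) x \<in> SZ (A i)" for i
  proof -
    have "(F ^^ i) x \<in> ts (c i) ` A i" using x[of "Suc i"] by (simp add: K_def U_def)
    then show ?thesis unfolding shiftZ_def by blast
  qed
  have "x \<in> XX" using x0 P_X[OF AP] by blast
  moreover have "(F ^^ n) x \<in> SZ XX" for n using xi SZ_mono[OF P_X[OF AP]] by blast
  ultimately have "x \<in> Xinf T h \<tau> F" by (simp add: Xinf_def)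
  moreover have "is_itinerary T \<tau> F P x A" unfolding is_itinerary_def using AP xi by blast
  ultimately show ?thesis by blast
qed

lemma part1:
  assumes x: "x \<in> Xinf T h \<tau> F" and it: "is_itinerary T \<tau> F P x A"
  shows "cg_infinite_path T h \<tau> F P (\<lambda>n. cls T h \<tau> F P (map A [0..<Suc n]))"
proof -
  have AP: "A n \<in> P" and Ai: "(F ^^ n) x \<in> SZ (A n)" for n using it by (auto simp: is_itinerary_def)
  have xX: "x \<in> XX" and xs: "(F ^^ n) x \<in> SZ XX" for n using x by (auto simp: Xinf_def)
  have xT: "x \<in> TS" using xX X_top by blast
  have W: "map A [0..<Suc n] \<in> words P" for n using AP by (auto simp: words_def)
  have ne: "cy (map A [0..<Suc n]) \<noteq> {}" for n
  proof -
    obtain m b where b: "b \<in> XX" "(F ^^ n) x = ts m b" using xs[of n] unfolding shiftZ_def by blast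
    have bT: "b \<in> TS" using b X_top by blast
    let ?y = "ts (-m) x"
    have "(F ^^ i) ?y \<in> SZ (A i)" for i
      using Fn_ts[OF xT] shiftZ_ts[OF P_top[OF AP] Ai] by simp
    then have yS: "?y \<in> Sw (map A [0..<Suc n])" unfolding Sw_def using ts_top[OF xT]
      by (auto simp del: upt_Suc)
    have "(F ^^ n) ?y = b" using Fn_ts[OF xT] b bT ts_add by simp
    then have "b \<in> cy (map A [0..<Suc n])" unfolding cy_Sw using yS b(1) by force
    then show ?thesis by blast
  qed
  have V: "cls T h \<tau> F P (map A [0..<Suc n]) \<in> cg_vertices T h \<tau> F P" for n
    unfolding cg_vertices_def using W ne by blast
  show ?thesis
    unfolding cg_infinite_path_def cg_arrow_def
  proof
    fix n
    have "map A [0..<Suc (Suc n)] = map A [0..<Suc n] @ [A (Suc n)]" by simp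
    then show "cls T h \<tau> F P (map A [0..<Suc n]) \<in> cg_vertices T h \<tau> F P \<and>
        cls T h \<tau> F P (map A [0..<Suc (Suc n)]) \<in> cg_vertices T h \<tau> F P \<and>
        (\<exists>w Aa. w \<in> words P \<and> Aa \<in> P \<and> cls T h \<tau> F P (map A [0..<Suc n]) = cls T h \<tau> F P w \<and>
           cls T h \<tau> F P (map A [0..<Suc (Suc n)]) = cls T h \<tau> F P (w @ [Aa]))"
      using V W AP by metis
  qed
qed

end



context LG begin

lemma part2:
  assumes path: "cg_infinite_path T h \<tau> F P \<alpha>" and k: "cls_height T h \<tau> F P (\<alpha> 0) = k"
  shows "\<exists>x A. x \<in> Xinf T h \<tau> F \<and> is_itinerary T \<tau> F P x A \<and>
                   (\<forall>n. \<alpha> n = cls T h \<tau> F P (map A [0..<n + k + 1]))"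
proof -
  let ?cls = "cls T h \<tau> F P"
  have arr: "cg_arrow T h \<tau> F P (\<alpha> n) (\<alpha> (Suc n))" for n
    using path by (simp add: cg_infinite_path_def)
  have vert: "\<alpha> n \<in> cg_vertices T h \<tau> F P" for n using arr[of n] by (simp add: cg_arrow_def)
  have "\<forall>n. \<exists>w. w \<in> words P \<and> (\<exists>B. B \<in> P \<and> \<alpha> n = ?cls w \<and> \<alpha> (Suc n) = ?cls (w @ [B]))"
    using arr by (simp add: cg_arrow_def)
  then obtain wf where wf: "\<And>n. wf n \<in> words P \<and> (\<exists>B. B \<in> P \<and> \<alpha> n = ?cls (wf n) \<and> \<alpha> (Suc n) = ?cls (wf n @ [B]))"
    by metis
  then obtain Bf where Bf: "\<And>n. Bf n \<in> P \<and> \<alpha> n = ?cls (wf n) \<and> \<alpha> (Suc n) = ?cls (wf n @ [Bf n])"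
    by metis
  have "\<exists>w. w \<in> words P \<and> \<alpha> 0 = ?cls w" using vert[of 0] by (auto simp: cg_vertices_def)
  then have ws: "(SOME w. w \<in> words P \<and> \<alpha> 0 = ?cls w) \<in> words P \<and> \<alpha> 0 = ?cls (SOME w. w \<in> words P \<and> \<alpha> 0 = ?cls w)"
    by (rule someI_ex)
  define w0 where "w0 = (SOME w. w \<in> words P \<and> \<alpha> 0 = ?cls w)"
  have w0: "w0 \<in> words P" "\<alpha> 0 = ?cls w0" using ws by (simp_all add: w0_def)
  define Q where "Q i \<longleftrightarrow> i < length w0 \<and> wsim T h \<tau> F w0 (drop i w0)" for i
  define i0 where "i0 = (GREATEST i. Q i)"
  have Q0: "Q 0" using wsim_refl[OF w0(1)] w0 by (simp add: Q_def words_def)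
  have Qi0: "Q i0" unfolding i0_def
    by (rule GreatestI_ex_nat[of Q, OF exI[of Q, OF Q0], of "length w0"]) (simp add: Q_def)
  have kk: "k = length w0 - 1 - i0"
    using k unfolding cls_height_def word_height_def w0_def[symmetric] i0_def Q_def by simp
  define S where "S = drop i0 w0"
  have S: "S \<in> words P" using words_drop[OF w0(1)] Qi0 by (simp add: Q_def S_def)
  have lenS: "length S = Suc k" using Qi0 kk by (simp add: Q_def S_def Suc_diff_Suc)
  have a0: "\<alpha> 0 = ?cls S" using w0 cls_eq[OF w0(1) S] Qi0 by (simp add: Q_def S_def)
  define W where "W n = S @ map Bf [0..<n]" for n
  have Ww: "W n \<in> words P" for n using S Bf by (auto simp: W_def words_def)
  have aW: "\<alpha> n = ?cls (W n)" for n
  proof (induction n)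
    case 0 then show ?case using a0 by (simp add: W_def)
  next
    case (Suc n)
    have wn: "wf n \<in> words P" using wf by blast
    have "wsim T h \<tau> F (wf n) (W n)" using cls_eq[OF wn Ww] Suc Bf by metis
    then have "wsim T h \<tau> F (wf n @ [Bf n]) (W n @ [Bf n])" using wsim_snoc[OF wn Ww] Bf by blast
    moreover have "wf n @ [Bf n] \<in> words P" "W n @ [Bf n] \<in> words P"
      using wn Ww Bf by (auto simp: words_def)
    ultimately have "?cls (wf n @ [Bf n]) = ?cls (W n @ [Bf n])" using cls_eq by blast
    moreover have "W (Suc n) = W n @ [Bf n]" by (simp add: W_def)
    moreover have "\<alpha> (Suc n) = ?cls (wf n @ [Bf n])" using Bf by blast
    ultimately show ?case by simp
  qed
  have Wne: "cy (W n) \<noteq> {}" for n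
  proof -
    obtain u where u: "u \<in> words P" "cy u \<noteq> {}" "\<alpha> n = ?cls u" using vert[of n] by (auto simp: cg_vertices_def)
    have "?cls u = ?cls (W n)" using u(3) aW[of n] by simp
    then have "wsim T h \<tau> F u (W n)" using cls_eq[OF u(1) Ww] by blast
    then show ?thesis using wsim_cy[OF u(1) Ww] u(2) by simp
  qed
  define A where "A i = (if i < Suc k then S ! i else Bf (i - Suc k))" for i
  have AP: "A i \<in> P" for i using words_P[OF S] Bf lenS by (simp add: A_def)
  have mapA: "map A [0..<n + k + 1] = W n" for n
  proof (rule nth_equalityI)
    show "length (map A [0..<n + k + 1]) = length (W n)" using lenS by (simp add: W_def)
    fix i assume "i < length (map A [0..<n + k + 1])"
    then have i: "i < n + k + 1" by simp
    have e: "map A [0..<n + k + 1] ! i = A i" using i by (simp del: upt_Suc)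
    have "A i = W n ! i" using i lenS by (simp add: A_def W_def nth_append)
    then show "map A [0..<n + k + 1] ! i = W n ! i" using e by simp
  qed
  have fin: "\<exists>y\<in>TS. \<forall>i<N. (F ^^ i) y \<in> SZ (A i)" for N
  proof -
    obtain z where "z \<in> cy (W N)" using Wne by blast
    then obtain y where y: "y \<in> Sw (W N)" unfolding cy_Sw by blast
    have "(F ^^ i) y \<in> SZ (A i)" if "i < N" for i
    proof -
      have i: "i < length (W N)" using that lenS by (simp add: W_def)
      have "W N ! i = map A [0..<N + k + 1] ! i" using mapA[of N] by simp
      also have "\<dots> = A i" using that by (simp del: upt_Suc)
      finally have "W N ! i = A i" .
      moreover have "(F ^^ i) y \<in> SZ (W N ! i)" using y i unfolding Sw_def by blast
      ultimately show ?thesis by simp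
    qed
    then show ?thesis using y by (auto simp: Sw_def)
  qed
  obtain x where x: "x \<in> Xinf T h \<tau> F" "is_itinerary T \<tau> F P x A" using realize[OF AP fin] by blast
  show ?thesis using x aW mapA by metis
qed

end

theorem mainTheorem8:
  fixes T :: "'a topology" and h :: "real \<Rightarrow> 'a" and \<tau> F :: "'a \<Rightarrow> 'a"
    and \<Lambda> :: "'i set" and \<gamma> :: "'i \<Rightarrow> real \<Rightarrow> 'a"
    and P :: "'a set set" and lab :: "'a set \<Rightarrow> 'i" and p :: "'a set \<Rightarrow> int"
  assumes "lifted_graph T h \<tau>"
    and "continuous_map T T F"
    and "degree_one T \<tau> F"
    and "sun_like T h F \<Lambda> \<gamma>"
    and "basic_partition T h \<tau> F \<Lambda> \<gamma> P lab p"
  shows "(\<forall>x A. x \<in> Xinf T h \<tau> F \<and> is_itinerary T \<tau> F P x A \<longrightarrow>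
            cg_infinite_path T h \<tau> F P (\<lambda>n. cls T h \<tau> F P (map A [0..<Suc n])))
     \<and> (\<forall>\<alpha> k. cg_infinite_path T h \<tau> F P \<alpha> \<and> cls_height T h \<tau> F P (\<alpha> 0) = k \<longrightarrow>
            (\<exists>x A. x \<in> Xinf T h \<tau> F \<and> is_itinerary T \<tau> F P x A \<and>
                   (\<forall>n. \<alpha> n = cls T h \<tau> F P (map A [0..<n + k + 1]))))"
proof -
  interpret LG T h \<tau> F \<Lambda> \<gamma> P lab p using assms by unfold_locales
  show ?thesis using part1 part2 by blast
qed

end
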